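(* Let $\mathsf{L}$ be a logic, $\mathcal{C}$ a class of $\mathsf{L}$-models, and $\Theta$ an $(\mathsf{L},\mathcal{C})$-pair (with, for each $M\in\mathcal{C}$, fixed functions $\mathsf{sem}^o_M$ witnessing the inductive property and a fixed set $\mathsf{SAT}_M$ as described in the context). Then the semantic enumeration procedure described in the context, run on a $\mathcal{C}$-sample $\mathcal{S}=(\mathcal{P},\mathcal{N})$, accepts if and only if $\mathcal{S}$ is $\mathsf{L}$-separable; that is, it decides the passive learning problem $\mathsf{PvLn}(\mathsf{L},\mathcal{C})$.
   Context: A logic $\mathsf{L}$ is given by a syntax $(\mathcal{T},\mathcal{T}_f,\mathsf{Op},(\tau_o)_{o\in\mathsf{Op}},T)$: $\mathcal{T}$ a non-empty finite set of types, $\emptyset\neq\mathcal{T}_f\subseteq\mathcal{T}$ final types, $\mathsf{Op}=\mathsf{Op}_0\uplus\mathsf{Op}_1\uplus\mathsf{Op}_2$ operators of arity 0,1,2 with $\mathsf{Op}_0\ne\emptyset$, each $o$ with a type $\tau_o\in\mathcal{T}$ and sets $T(o,i)\subseteq\mathcal{T}$ of allowed argument types. Formulas of type $\tau$, $\mathsf{Fm}_{\mathsf{L}}(\tau)$, are built inductively: $o\in\mathsf{Op}_0$ has type $\tau_o$; $o(\varphi_1)$ (resp. $o(\varphi_1,\varphi_2)$) has type $\tau_o$ when each $\varphi_i$ has a type in $T(o,i)$. $\mathsf{Fm}_{\mathsf{L}}(X)=\bigcup_{\tau\in X}\mathsf{Fm}_{\mathsf{L}}(\tau)$; final formulas are $\mathsf{Fm}^f_{\mathsf{L}}=\mathsf{Fm}_{\mathsf{L}}(\mathcal{T}_f)$.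 An $\mathsf{L}$-model $M$ has a satisfaction relation $M\models\varphi$ for final formulas; a class of $\mathsf{L}$-models is a set of them. A $\mathcal{C}$-sample is a pair $(\mathcal{P},\mathcal{N})$ of finite subsets of $\mathcal{C}$; it is $\mathsf{L}$-separable if some final formula $\varphi$ has $M\models\varphi$ for all $M\in\mathcal{P}$ and $M\not\models\varphi$ for all $M\in\mathcal{N}$. $\mathsf{PvLn}(\mathsf{L},\mathcal{C})$: given a $\mathcal{C}$-sample, decide whether it is $\mathsf{L}$-separable. An $(\mathsf{L},M)$-pair $(\mathsf{SEM}_M,\mathsf{sem}_M)$: a finite set $\mathsf{SEM}_M=\bigcup_\tau\mathsf{SEM}_M(\tau)$ (pairwise disjoint parts) and $\mathsf{sem}_M:\mathsf{Fm}_{\mathsf{L}}\to\mathsf{SEM}_M$ mapping type-$\tau$ formulas into $\mathsf{SEM}_M(\tau)$; $\mathsf{SEM}_M(X)=\bigcup_{\tau\in X}\mathsf{SEM}_M(\tau)$. It captures the $\mathsf{L}$-semantics if for all $\tau$ and all final $\varphi,\varphi'$ of type $\tau$ with $\mathsf{sem}_M(\varphi)=\mathsf{sem}_M(\varphi')$ we have $M\models\varphi$ iff $M\models\varphi'$; in that case fix a subset $\mathsf{SAT}_M\subseteq\mathsf{SEM}_M$ such that for every final $\varphi$, $M\models\varphi$ iff $\mathsf{sem}_M(\varphi)\in\mathsf{SAT}_M$. It satisfies the inductive property if for each $o\in\mathsf{Op}_1$ there is $\mathsf{sem}^o_M:\mathsf{SEM}_M(T(o,1))\to\mathsf{SEM}_M(\tau_o)$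 with $\mathsf{sem}_M(o(\varphi_1))=\mathsf{sem}^o_M(\mathsf{sem}_M(\varphi_1))$ for all $\varphi_1\in\mathsf{Fm}_{\mathsf{L}}(T(o,1))$, and for each $o\in\mathsf{Op}_2$ there is $\mathsf{sem}^o_M:\mathsf{SEM}_M(T(o,1))\times\mathsf{SEM}_M(T(o,2))\to\mathsf{SEM}_M(\tau_o)$ with $\mathsf{sem}_M(o(\varphi_1,\varphi_2))=\mathsf{sem}^o_M(\mathsf{sem}_M(\varphi_1),\mathsf{sem}_M(\varphi_2))$; fix such functions. An $(\mathsf{L},\mathcal{C})$-pair is a family $(\Theta_M)_{M\in\mathcal{C}}$ of $(\mathsf{L},M)$-pairs each capturing the $\mathsf{L}$-semantics and satisfying the inductive property. The procedure on input $\mathcal{S}=(\mathcal{P},\mathcal{N})$ (with $\mathcal{S}$ identified with $\mathcal{P}\cup\mathcal{N}$): start with the set $R$ of pairs $((\mathsf{sem}_M(o))_{M\in\mathcal{S}},\tau_o)$ for $o\in\mathsf{Op}_0$; repeatedly, until $R$ no longer changes, add for every $o\in\mathsf{Op}_1$ and every $(X,\tau_1)\in R$ with $\tau_1\in T(o,1)$ the pair $((\mathsf{sem}^o_M(X[M]))_{M\in\mathcal{S}},\tau_o)$, and for every $o\in\mathsf{Op}_2$ and all $(X_1,\tau_1),(X_2,\tau_2)\in R$ with $\tau_i\in T(o,i)$ the pair $((\mathsf{sem}^o_M(X_1[M],X_2[M]))_{M\in\mathcal{S}},\tau_o)$. Finally, accept iff there is $(X,\tau)\in R$ with $\tau\in\mathcal{T}_f$,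 $X[M]\in\mathsf{SAT}_M$ for all $M\in\mathcal{P}$ and $X[M]\in\mathsf{SEM}_M\setminus\mathsf{SAT}_M$ for all $M\in\mathcal{N}$; otherwise reject. *)

theory Defs
  imports Main "HOL-Library.FuncSet"
begin

record ('ty, 'op) logic_syntax =
  types  :: "'ty set"
  finals :: "'ty set"
  ops    :: "'op set"
  arity  :: "'op \<Rightarrow> nat"
  otype  :: "'op \<Rightarrow> 'ty"
  argT   :: "'op \<Rightarrow> nat \<Rightarrow> 'ty set"

definition wf_syntax :: "('ty, 'op) logic_syntax \<Rightarrow> bool" where
  "wf_syntax L \<longleftrightarrow>
     finite (types L) \<and> types L \<noteq> {} \<and>
     finals L \<noteq> {} \<and> finals L \<subseteq> types L \<and>
     (\<forall>p\<in>ops L. arity L p \<le> 2 \<and> otype L p \<in> types L \<and>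
        (\<forall>i. argT L p i \<subseteq> types L)) \<and>
     (\<exists>p\<in>ops L. arity L p = 0)"

datatype 'op fm = Op0 'op | Op1 'op "'op fm" | Op2 'op "'op fm" "'op fm"

fun head :: "'op fm \<Rightarrow> 'op" where
  "head (Op0 p) = p"
| "head (Op1 p _) = p"
| "head (Op2 p _ _) = p"

fun wf_fm :: "('ty, 'op) logic_syntax \<Rightarrow> 'op fm \<Rightarrow> bool" where
  "wf_fm L (Op0 p) \<longleftrightarrow> p \<in> ops L \<and> arity L p = 0"
| "wf_fm L (Op1 p f) \<longleftrightarrow> p \<in> ops L \<and> arity L p = 1 \<and> wf_fm L f \<and>
      otype L (head f) \<in> argT L p 1"
| "wf_fm L (Op2 p f g) \<longleftrightarrow> p \<in> ops L \<and> arity L p = 2 \<and> wf_fm L f \<and> wf_fm L g \<and>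
      otype L (head f) \<in> argT L p 1 \<and> otype L (head g) \<in> argT L p 2"

definition Fm :: "('ty, 'op) logic_syntax \<Rightarrow> 'ty \<Rightarrow> 'op fm set" where
  "Fm L \<tau> = {\<phi>. wf_fm L \<phi> \<and> otype L (head \<phi>) = \<tau>}"

definition FmS :: "('ty, 'op) logic_syntax \<Rightarrow> 'ty set \<Rightarrow> 'op fm set" where
  "FmS L X = (\<Union>\<tau>\<in>X. Fm L \<tau>)"

definition Fm_final :: "('ty, 'op) logic_syntax \<Rightarrow> 'op fm set" where
  "Fm_final L = FmS L (finals L)"

text \<open>Models of type 'm; sat M \<phi> is the satisfaction relation (only used on final formulas).\<close>

definition sample :: "'m set \<Rightarrow> 'm set \<Rightarrow> 'm set \<Rightarrow> bool" where
  "sample C P N \<longleftrightarrow> finite P \<and> finite N \<and> P \<subseteq> C \<and> N \<subseteq> C"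

definition separable ::
  "('ty, 'op) logic_syntax \<Rightarrow> ('m \<Rightarrow> 'op fm \<Rightarrow> bool) \<Rightarrow> 'm set \<Rightarrow> 'm set \<Rightarrow> bool" where
  "separable L sat P N \<longleftrightarrow>
     (\<exists>\<phi>\<in>Fm_final L. (\<forall>M\<in>P. sat M \<phi>) \<and> (\<forall>M\<in>N. \<not> sat M \<phi>))"

record ('m, 'ty, 'op, 'v) sem_pair =
  SEMt :: "'m \<Rightarrow> 'ty \<Rightarrow> 'v set"
  sem  :: "'m \<Rightarrow> 'op fm \<Rightarrow> 'v"
  sem1 :: "'m \<Rightarrow> 'op \<Rightarrow> 'v \<Rightarrow> 'v"
  sem2 :: "'m \<Rightarrow> 'op \<Rightarrow> 'v \<Rightarrow> 'v \<Rightarrow> 'v"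
  SAT  :: "'m \<Rightarrow> 'v set"

definition SEMS :: "('m, 'ty, 'op, 'v) sem_pair \<Rightarrow> 'm \<Rightarrow> 'ty set \<Rightarrow> 'v set" where
  "SEMS \<Theta> M X = (\<Union>\<tau>\<in>X. SEMt \<Theta> M \<tau>)"

definition SEM :: "('ty, 'op) logic_syntax \<Rightarrow> ('m, 'ty, 'op, 'v) sem_pair \<Rightarrow> 'm \<Rightarrow> 'v set" where
  "SEM L \<Theta> M = SEMS \<Theta> M (types L)"

definition LM_pair :: "('ty, 'op) logic_syntax \<Rightarrow> ('m, 'ty, 'op, 'v) sem_pair \<Rightarrow> 'm \<Rightarrow> bool" where
  "LM_pair L \<Theta> M \<longleftrightarrow>
     finite (SEM L \<Theta> M) \<and>
     (\<forall>\<tau>\<in>types L. \<forall>\<tau>'\<in>types L. \<tau> \<noteq> \<tau>' \<longrightarrow> SEMt \<Theta> M \<tau> \<inter> SEMt \<Theta> M \<tau>' = {}) \<and>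
     (\<forall>\<tau>\<in>types L. \<forall>\<phi>\<in>Fm L \<tau>. sem \<Theta> M \<phi> \<in> SEMt \<Theta> M \<tau>)"

definition captures ::
  "('ty, 'op) logic_syntax \<Rightarrow> ('m \<Rightarrow> 'op fm \<Rightarrow> bool) \<Rightarrow> ('m, 'ty, 'op, 'v) sem_pair \<Rightarrow> 'm \<Rightarrow> bool" where
  "captures L sat \<Theta> M \<longleftrightarrow>
     (\<forall>\<tau>\<in>finals L. \<forall>\<phi>\<in>Fm L \<tau>. \<forall>\<phi>'\<in>Fm L \<tau>.
        sem \<Theta> M \<phi> = sem \<Theta> M \<phi>' \<longrightarrow> (sat M \<phi> \<longleftrightarrow> sat M \<phi>'))"

definition SAT_ok ::
  "('ty, 'op) logic_syntax \<Rightarrow> ('m \<Rightarrow> 'op fm \<Rightarrow> bool) \<Rightarrow> ('m, 'ty, 'op, 'v) sem_pair \<Rightarrow> 'm \<Rightarrow> bool" where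
  "SAT_ok L sat \<Theta> M \<longleftrightarrow>
     SAT \<Theta> M \<subseteq> SEM L \<Theta> M \<and>
     (\<forall>\<phi>\<in>Fm_final L. sat M \<phi> \<longleftrightarrow> sem \<Theta> M \<phi> \<in> SAT \<Theta> M)"

text \<open>Inductive property, witnessed by the fixed functions sem1 / sem2.\<close>
definition inductive_prop :: "('ty, 'op) logic_syntax \<Rightarrow> ('m, 'ty, 'op, 'v) sem_pair \<Rightarrow> 'm \<Rightarrow> bool" where
  "inductive_prop L \<Theta> M \<longleftrightarrow>
     (\<forall>p\<in>ops L. arity L p = 1 \<longrightarrow>
        (\<forall>x\<in>SEMS \<Theta> M (argT L p 1). sem1 \<Theta> M p x \<in> SEMt \<Theta> M (otype L p)) \<and>
        (\<forall>\<phi>\<in>FmS L (argT L p 1). sem \<Theta> M (Op1 p \<phi>) = sem1 \<Theta> M p (sem \<Theta> M \<phi>))) \<and>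
     (\<forall>p\<in>ops L. arity L p = 2 \<longrightarrow>
        (\<forall>x\<in>SEMS \<Theta> M (argT L p 1). \<forall>y\<in>SEMS \<Theta> M (argT L p 2).
            sem2 \<Theta> M p x y \<in> SEMt \<Theta> M (otype L p)) \<and>
        (\<forall>\<phi>\<in>FmS L (argT L p 1). \<forall>\<psi>\<in>FmS L (argT L p 2).
            sem \<Theta> M (Op2 p \<phi> \<psi>) = sem2 \<Theta> M p (sem \<Theta> M \<phi>) (sem \<Theta> M \<psi>)))"

definition LC_pair ::
  "('ty, 'op) logic_syntax \<Rightarrow> ('m \<Rightarrow> 'op fm \<Rightarrow> bool) \<Rightarrow> 'm set \<Rightarrow> ('m, 'ty, 'op, 'v) sem_pair \<Rightarrow> bool" where
  "LC_pair L sat C \<Theta> \<longleftrightarrow>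
     (\<forall>M\<in>C. LM_pair L \<Theta> M \<and> captures L sat \<Theta> M \<and> SAT_ok L sat \<Theta> M \<and> inductive_prop L \<Theta> M)"

text \<open>Vectors (X[M])_{M \<in> S} are represented as functions restricted to S.\<close>

definition enum_init ::
  "('ty, 'op) logic_syntax \<Rightarrow> ('m, 'ty, 'op, 'v) sem_pair \<Rightarrow> 'm set \<Rightarrow> (('m \<Rightarrow> 'v) \<times> 'ty) set" where
  "enum_init L \<Theta> S =
     {(restrict (\<lambda>M. sem \<Theta> M (Op0 p)) S, otype L p) | p. p \<in> ops L \<and> arity L p = 0}"

definition enum_step ::
  "('ty, 'op) logic_syntax \<Rightarrow> ('m, 'ty, 'op, 'v) sem_pair \<Rightarrow> 'm set \<Rightarrow>
     (('m \<Rightarrow> 'v) \<times> 'ty) set \<Rightarrow> (('m \<Rightarrow> 'v) \<times> 'ty) set" where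
  "enum_step L \<Theta> S R = R \<union>
     {(restrict (\<lambda>M. sem1 \<Theta> M p (X M)) S, otype L p) | p X \<tau>1.
         p \<in> ops L \<and> arity L p = 1 \<and> (X, \<tau>1) \<in> R \<and> \<tau>1 \<in> argT L p 1} \<union>
     {(restrict (\<lambda>M. sem2 \<Theta> M p (X1 M) (X2 M)) S, otype L p) | p X1 \<tau>1 X2 \<tau>2.
         p \<in> ops L \<and> arity L p = 2 \<and> (X1, \<tau>1) \<in> R \<and> (X2, \<tau>2) \<in> R \<and>
         \<tau>1 \<in> argT L p 1 \<and> \<tau>2 \<in> argT L p 2}"

definition enum_R ::
  "('ty, 'op) logic_syntax \<Rightarrow> ('m, 'ty, 'op, 'v) sem_pair \<Rightarrow> 'm set \<Rightarrow> nat \<Rightarrow> (('m \<Rightarrow> 'v) \<times> 'ty) set" where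
  "enum_R L \<Theta> S k = (enum_step L \<Theta> S ^^ k) (enum_init L \<Theta> S)"

definition enum_terminates ::
  "('ty, 'op) logic_syntax \<Rightarrow> ('m, 'ty, 'op, 'v) sem_pair \<Rightarrow> 'm set \<Rightarrow> 'm set \<Rightarrow> bool" where
  "enum_terminates L \<Theta> P N \<longleftrightarrow>
     (\<exists>k. enum_R L \<Theta> (P \<union> N) (Suc k) = enum_R L \<Theta> (P \<union> N) k)"

definition enum_final ::
  "('ty, 'op) logic_syntax \<Rightarrow> ('m, 'ty, 'op, 'v) sem_pair \<Rightarrow> 'm set \<Rightarrow> 'm set \<Rightarrow> (('m \<Rightarrow> 'v) \<times> 'ty) set" where
  "enum_final L \<Theta> P N =
     enum_R L \<Theta> (P \<union> N) (LEAST k. enum_R L \<Theta> (P \<union> N) (Suc k) = enum_R L \<Theta> (P \<union> N) k)"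

definition enum_accepts ::
  "('ty, 'op) logic_syntax \<Rightarrow> ('m, 'ty, 'op, 'v) sem_pair \<Rightarrow> 'm set \<Rightarrow> 'm set \<Rightarrow> bool" where
  "enum_accepts L \<Theta> P N \<longleftrightarrow>
     (\<exists>(X, \<tau>)\<in>enum_final L \<Theta> P N. \<tau> \<in> finals L \<and>
        (\<forall>M\<in>P. X M \<in> SAT \<Theta> M) \<and> (\<forall>M\<in>N. X M \<in> SEM L \<Theta> M - SAT \<Theta> M))"

end

theory Submission
  imports Defs
begin

lemma R_Suc: "enum_R L \<Theta> S (Suc k) = enum_step L \<Theta> S (enum_R L \<Theta> S k)"
  by (simp add: enum_R_def)

lemma R_0: "enum_R L \<Theta> S 0 = enum_init L \<Theta> S"
  by (simp add: enum_R_def)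

lemma R_mono_Suc: "enum_R L \<Theta> S k \<subseteq> enum_R L \<Theta> S (Suc k)"
  by (auto simp: R_Suc enum_step_def)

lemma R_mono: "k \<le> k' \<Longrightarrow> enum_R L \<Theta> S k \<subseteq> enum_R L \<Theta> S k'"
  by (induct k' rule: dec_induct) (use R_mono_Suc in blast)+

lemma R_inv:
  assumes wf: "wf_syntax L"
    and hS: "\<forall>M\<in>S. LM_pair L \<Theta> M \<and> inductive_prop L \<Theta> M"
  shows "(X, \<tau>) \<in> enum_R L \<Theta> S k \<Longrightarrow>
     \<tau> \<in> types L \<and> (\<exists>\<phi>\<in>Fm L \<tau>. X = restrict (\<lambda>M. sem \<Theta> M \<phi>) S)"
proof (induct k arbitrary: X \<tau>)
  case 0
  then obtain p where p: "p \<in> ops L" "arity L p = 0" "X = restrict (\<lambda>M. sem \<Theta> M (Op0 p)) S"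
    "\<tau> = otype L p"
    by (auto simp: R_0 enum_init_def)
  have "Op0 p \<in> Fm L \<tau>" using p by (simp add: Fm_def)
  moreover have "\<tau> \<in> types L" using wf p by (auto simp: wf_syntax_def)
  ultimately show ?case using p by blast
next
  case (Suc k)
  from Suc.prems have "(X, \<tau>) \<in> enum_step L \<Theta> S (enum_R L \<Theta> S k)" by (simp add: R_Suc)
  then consider "(X, \<tau>) \<in> enum_R L \<Theta> S k"
    | p Y \<tau>1 where "p \<in> ops L" "arity L p = 1" "(Y, \<tau>1) \<in> enum_R L \<Theta> S k" "\<tau>1 \<in> argT L p 1"
        "X = restrict (\<lambda>M. sem1 \<Theta> M p (Y M)) S" "\<tau> = otype L p"
    | p X1 \<tau>1 X2 \<tau>2 where "p \<in> ops L" "arity L p = 2" "(X1, \<tau>1) \<in> enum_R L \<Theta> S k"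
        "(X2, \<tau>2) \<in> enum_R L \<Theta> S k" "\<tau>1 \<in> argT L p 1" "\<tau>2 \<in> argT L p 2"
        "X = restrict (\<lambda>M. sem2 \<Theta> M p (X1 M) (X2 M)) S" "\<tau> = otype L p"
    unfolding enum_step_def by blast
  then show ?case
  proof cases
    case 1 then show ?thesis using Suc.hyps by blast
  next
    case 2
    obtain \<phi> where \<phi>: "\<phi> \<in> Fm L \<tau>1" "Y = restrict (\<lambda>M. sem \<Theta> M \<phi>) S"
      using Suc.hyps[OF 2(3)] by blast
    have f: "\<phi> \<in> FmS L (argT L p 1)" using \<phi> 2 by (auto simp: FmS_def)
    have "X = restrict (\<lambda>M. sem \<Theta> M (Op1 p \<phi>)) S"
    proof
      fix M show "X M = restrict (\<lambda>M. sem \<Theta> M (Op1 p \<phi>)) S M"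
      proof (cases "M \<in> S")
        case True
        then have "inductive_prop L \<Theta> M" using hS by blast
        then show ?thesis using True 2 \<phi> f unfolding inductive_prop_def by auto
      qed (simp add: 2)
    qed
    moreover have "Op1 p \<phi> \<in> Fm L \<tau>" using \<phi> 2 by (auto simp: Fm_def)
    moreover have "\<tau> \<in> types L" using wf 2 by (auto simp: wf_syntax_def)
    ultimately show ?thesis by blast
  next
    case 3
    obtain \<phi> where \<phi>: "\<phi> \<in> Fm L \<tau>1" "X1 = restrict (\<lambda>M. sem \<Theta> M \<phi>) S"
      using Suc.hyps[OF 3(3)] by blast
    obtain \<psi> where \<psi>: "\<psi> \<in> Fm L \<tau>2" "X2 = restrict (\<lambda>M. sem \<Theta> M \<psi>) S"
      using Suc.hyps[OF 3(4)] by blast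
    have f: "\<phi> \<in> FmS L (argT L p 1)" "\<psi> \<in> FmS L (argT L p 2)"
      using \<phi> \<psi> 3 by (auto simp: FmS_def)
    have "X = restrict (\<lambda>M. sem \<Theta> M (Op2 p \<phi> \<psi>)) S"
    proof
      fix M show "X M = restrict (\<lambda>M. sem \<Theta> M (Op2 p \<phi> \<psi>)) S M"
      proof (cases "M \<in> S")
        case True
        then have "inductive_prop L \<Theta> M" using hS by blast
        then show ?thesis using True 3 \<phi> \<psi> f unfolding inductive_prop_def by auto
      qed (simp add: 3)
    qed
    moreover have "Op2 p \<phi> \<psi> \<in> Fm L \<tau>" using \<phi> \<psi> 3 by (auto simp: Fm_def)
    moreover have "\<tau> \<in> types L" using wf 3 by (auto simp: wf_syntax_def)
    ultimately show ?thesis by blast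
  qed
qed

lemma R_complete:
  assumes hS: "\<forall>M\<in>S. inductive_prop L \<Theta> M"
  shows "wf_fm L \<phi> \<Longrightarrow> \<exists>k. (restrict (\<lambda>M. sem \<Theta> M \<phi>) S, otype L (head \<phi>)) \<in> enum_R L \<Theta> S k"
proof (induct \<phi>)
  case (Op0 p)
  then show ?case using Op0 by (intro exI[of _ 0]) (simp only: R_0 enum_init_def head.simps wf_fm.simps, blast)
next
  case (Op1 p \<phi>)
  then obtain k where k: "(restrict (\<lambda>M. sem \<Theta> M \<phi>) S, otype L (head \<phi>)) \<in> enum_R L \<Theta> S k"
    by (meson wf_fm.simps)
  have f: "\<phi> \<in> FmS L (argT L p 1)" using Op1 by (auto simp: FmS_def Fm_def)
  have eq: "restrict (\<lambda>M. sem \<Theta> M (Op1 p \<phi>)) S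
      = restrict (\<lambda>M. sem1 \<Theta> M p (restrict (\<lambda>M. sem \<Theta> M \<phi>) S M)) S"
    using hS Op1.prems f by (auto simp: inductive_prop_def intro!: restrict_ext)
  show ?case
    apply (rule exI[of _ "Suc k"])
    apply (simp only: R_Suc eq enum_step_def head.simps)
    apply (rule UnI1, rule UnI2)
    using k Op1.prems by (simp only: wf_fm.simps mem_Collect_eq) blast
next
  case (Op2 p \<phi> \<psi>)
  then obtain k1 where k1: "(restrict (\<lambda>M. sem \<Theta> M \<phi>) S, otype L (head \<phi>)) \<in> enum_R L \<Theta> S k1"
    by (meson wf_fm.simps)
  from Op2 obtain k2 where k2: "(restrict (\<lambda>M. sem \<Theta> M \<psi>) S, otype L (head \<psi>)) \<in> enum_R L \<Theta> S k2"
    by (meson wf_fm.simps)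
  let ?k = "max k1 k2"
  have k1': "(restrict (\<lambda>M. sem \<Theta> M \<phi>) S, otype L (head \<phi>)) \<in> enum_R L \<Theta> S ?k"
    using k1 R_mono[of k1 ?k] by auto
  have k2': "(restrict (\<lambda>M. sem \<Theta> M \<psi>) S, otype L (head \<psi>)) \<in> enum_R L \<Theta> S ?k"
    using k2 R_mono[of k2 ?k] by auto
  have f: "\<phi> \<in> FmS L (argT L p 1)" "\<psi> \<in> FmS L (argT L p 2)"
    using Op2 by (auto simp: FmS_def Fm_def)
  have eq: "restrict (\<lambda>M. sem \<Theta> M (Op2 p \<phi> \<psi>)) S
      = restrict (\<lambda>M. sem2 \<Theta> M p (restrict (\<lambda>M. sem \<Theta> M \<phi>) S M) (restrict (\<lambda>M. sem \<Theta> M \<psi>) S M)) S"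
    using hS Op2.prems f by (auto simp: inductive_prop_def intro!: restrict_ext)
  show ?case
    apply (rule exI[of _ "Suc ?k"])
    apply (simp only: R_Suc eq enum_step_def head.simps)
    apply (rule UnI2)
    using k1' k2' Op2.prems by (simp only: wf_fm.simps mem_Collect_eq) blast
qed

theorem theorem2:
  fixes L :: "('ty, 'op) logic_syntax"
    and sat :: "'m \<Rightarrow> 'op fm \<Rightarrow> bool"
    and C :: "'m set"
    and \<Theta> :: "('m, 'ty, 'op, 'v) sem_pair"
    and P N :: "'m set"
  assumes "wf_syntax L"
    and "LC_pair L sat C \<Theta>"
    and "sample C P N"
  shows "enum_terminates L \<Theta> P N \<and> (enum_accepts L \<Theta> P N \<longleftrightarrow> separable L sat P N)"
proof -
  define S where "S = P \<union> N"
  have finS: "finite S" and SC: "S \<subseteq> C" using assms(3) by (auto simp: sample_def S_def)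
  have hS: "\<forall>M\<in>S. LM_pair L \<Theta> M \<and> captures L sat \<Theta> M \<and> SAT_ok L sat \<Theta> M \<and> inductive_prop L \<Theta> M"
    using assms(2) SC by (auto simp: LC_pair_def)
  let ?R = "enum_R L \<Theta> S"
  define B where "B = PiE S (\<lambda>M. SEM L \<Theta> M) \<times> types L"
  have finB: "finite B" unfolding B_def using finS hS assms(1)
    by (intro finite_cartesian_product finite_PiE) (auto simp: LM_pair_def wf_syntax_def)
  have RB: "?R k \<subseteq> B" for k
  proof
    fix x assume "x \<in> ?R k"
    then obtain X \<tau> where x: "x = (X, \<tau>)" "(X, \<tau>) \<in> ?R k" by (cases x) auto
    from R_inv[OF assms(1) _ x(2)] hS obtain \<phi> where
      \<phi>: "\<tau> \<in> types L" "\<phi> \<in> Fm L \<tau>" "X = restrict (\<lambda>M. sem \<Theta> M \<phi>) S" by blast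
    have "\<forall>M\<in>S. sem \<Theta> M \<phi> \<in> SEM L \<Theta> M"
      using hS \<phi> by (auto simp: LM_pair_def SEM_def SEMS_def)
    then show "x \<in> B" using x \<phi> by (auto simp: B_def)
  qed
  have termi: "\<exists>k. ?R (Suc k) = ?R k"
  proof (rule ccontr)
    assume "\<not> ?thesis"
    then have ps: "?R k \<subset> ?R (Suc k)" for k using R_mono_Suc by blast
    have "k \<le> card (?R k)" for k
    proof (induct k)
      case (Suc k)
      have "card (?R k) < card (?R (Suc k))"
        by (rule psubset_card_mono[OF finite_subset[OF RB finB] ps])
      then show ?case using Suc by simp
    qed simp
    moreover have "card (?R k) \<le> card B" for k by (rule card_mono[OF finB RB])
    ultimately have "Suc (card B) \<le> card B" by (meson order_trans)
    then show False by simp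
  qed
  define k0 where "k0 = (LEAST k. ?R (Suc k) = ?R k)"
  have k0: "?R (Suc k0) = ?R k0" unfolding k0_def using termi by (rule LeastI_ex)
  have stab: "k0 \<le> k \<Longrightarrow> ?R k = ?R k0" for k
    by (induct k rule: dec_induct) (simp, metis R_Suc k0)
  have fin: "enum_final L \<Theta> P N = ?R k0" by (simp add: enum_final_def k0_def S_def)
  have allin: "?R k \<subseteq> ?R k0" for k
  proof (cases "k \<le> k0")
    case True then show ?thesis by (rule R_mono)
  next
    case False then show ?thesis using stab[of k] by simp
  qed
  have "enum_accepts L \<Theta> P N \<longleftrightarrow> separable L sat P N"
  proof
    assume "enum_accepts L \<Theta> P N"
    then obtain X \<tau> where X: "(X, \<tau>) \<in> ?R k0" "\<tau> \<in> finals L"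
      "\<forall>M\<in>P. X M \<in> SAT \<Theta> M" "\<forall>M\<in>N. X M \<in> SEM L \<Theta> M - SAT \<Theta> M"
      unfolding enum_accepts_def fin by blast
    from R_inv[OF assms(1) _ X(1)] hS obtain \<phi> where
      \<phi>: "\<phi> \<in> Fm L \<tau>" "X = restrict (\<lambda>M. sem \<Theta> M \<phi>) S" by blast
    have ff: "\<phi> \<in> Fm_final L" using \<phi> X by (auto simp: Fm_final_def FmS_def)
    have "\<forall>M\<in>P. sat M \<phi>"
    proof
      fix M assume M: "M \<in> P"
      then have "SAT_ok L sat \<Theta> M" using hS S_def by blast
      then show "sat M \<phi>" using ff X M \<phi> by (auto simp: SAT_ok_def S_def)
    qed
    moreover have "\<forall>M\<in>N. \<not> sat M \<phi>"
    proof
      fix M assume M: "M \<in> N"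
      then have "SAT_ok L sat \<Theta> M" using hS S_def by blast
      then show "\<not> sat M \<phi>" using ff X M \<phi> by (auto simp: SAT_ok_def S_def)
    qed
    ultimately show "separable L sat P N" using ff by (auto simp: separable_def)
  next
    assume "separable L sat P N"
    then obtain \<phi> where \<phi>: "\<phi> \<in> Fm_final L" "\<forall>M\<in>P. sat M \<phi>" "\<forall>M\<in>N. \<not> sat M \<phi>"
      by (auto simp: separable_def)
    then obtain \<tau> where t: "\<tau> \<in> finals L" "\<phi> \<in> Fm L \<tau>" by (auto simp: Fm_final_def FmS_def)
    then have wfp: "wf_fm L \<phi>" "otype L (head \<phi>) = \<tau>" by (auto simp: Fm_def)
    obtain k where "(restrict (\<lambda>M. sem \<Theta> M \<phi>) S, \<tau>) \<in> ?R k"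
      using R_complete[of S L \<Theta> \<phi>] hS wfp by auto
    then have inR: "(restrict (\<lambda>M. sem \<Theta> M \<phi>) S, \<tau>) \<in> ?R k0" using allin by blast
    have tt: "\<tau> \<in> types L" using t assms(1) by (auto simp: wf_syntax_def)
    have "\<forall>M\<in>P. sem \<Theta> M \<phi> \<in> SAT \<Theta> M"
      using hS \<phi> by (auto simp: SAT_ok_def S_def)
    moreover have "\<forall>M\<in>N. sem \<Theta> M \<phi> \<in> SEM L \<Theta> M - SAT \<Theta> M"
    proof
      fix M assume M: "M \<in> N"
      then have h: "SAT_ok L sat \<Theta> M" "LM_pair L \<Theta> M" using hS S_def by auto
      show "sem \<Theta> M \<phi> \<in> SEM L \<Theta> M - SAT \<Theta> M"
        using h M \<phi> t tt unfolding SAT_ok_def LM_pair_def SEM_def SEMS_def by blast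
    qed
    ultimately show "enum_accepts L \<Theta> P N"
      unfolding enum_accepts_def fin using inR t
      by (intro bexI[OF _ inR]) (auto simp: S_def)
  qed
  then show ?thesis using termi by (simp add: enum_terminates_def S_def)
qed

end
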